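(* Let $R$ be a $\Gamma$-ring and $r\in R[2]$ a formal difference law in $R$. Then $(p^2_1(r))^2=1$ in $R[1]$, and the element $w=p^3_2\circ p^4_2(r^2)\in R[2]$ is a formal sum law in $R$. Moreover, if $R$ is discrete, the multiplicative map $H\mathbb{N}\to R$ determined by $w$ (sending $1_{2^n}\mapsto w^n$) equals the composite of the inclusion $H\mathbb{N}\to H\mathbb{Z}$ with the multiplicative map $H\mathbb{Z}\to R$ determined by $r$ (sending $\pm1_n\mapsto r^n$).
   Context: Let $[n]=\{0,1,\dots,n\}$, pointed at $0$. A $\Gamma$-space is a functor $F$ from the finite pointed sets $[n]$ (with pointed maps) to pointed simplicial sets with $F[0]$ a point; for a pointed map $f$ we write $f$ also for $F(f)$; $\Sigma_n$ acts on $F[n]$ via permutations of $\{1,\dots,n\}$. We identify $[n]\wedge[m]$ with $[nm]$ via $i\wedge j\mapsto (j-1)n+i$. A $\Gamma$-ring is a $\Gamma$-space $R$ with unit $1\in R[1]$ (image of the unit map $\eta$) and associative unital multiplication given by natural maps $R(K)\wedge R(L)\to R(K\wedge L)$, $p\wedge q\mapsto pq$; it is discrete if all $R(K)$ are sets; $0\in R[1]$ denotes the basepoint. For $x\in R[2]$, $x^k\in R[2^k]$ is the $k$-fold product. Maps: $p^n_i:[n]\to[n-1]$, $p^n_i(j)=j$ ($j<i$), $p^n_i(i)=0$, $p^n_i(j)=j-1$ ($j>i$); for $1\le i<j\le n$ and $1\le k\le n-1$, $s^n_{i,j,k}:[n]\to[n-1]$ sends $0\mapsto0$, $i,j\mapsto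 k$, and the remaining elements order-preservingly and bijectively onto $\{1,\dots,n-1\}\setminus\{k\}$; $d^n_j:[n-1]\to[n]$ is the order-preserving injection missing $j$. $H\mathbb{Z}$ (resp. $H\mathbb{N}$) is the $\Gamma$-ring with $H\mathbb{Z}(K)$ the reduced free abelian group (resp. free commutative monoid) on $K$, pointed maps acting by summing coefficients along fibres, unit the inclusion of generators, multiplication $(\sum a_k k)(\sum b_l l)=\sum a_kb_l (k\wedge l)$. $1_n=(1,\dots,1)\in H\mathbb N[n]$ and $\pm1_n=(1,-1)^n\in H\mathbb{Z}[2^n]$. For $k\ge1$, split $\{1,\dots,2^k\}=A_+\sqcup A_-$ where $i\in A_+$ iff the binary expansion of $i-1$ has an even number of digits $1$ (so $\pm1_k$ has entry $1$ on $A_+$ and $-1$ on $A_-$). The special action of $\Sigma_{2^{k-1}}\times\Sigma_{2^{k-1}}$ on $F[2^k]$ is the action of the group of permutations of $\{1,\dots,2^k\}$ preserving $A_+$ and $A_-$. Let $\sigma$ be the nontrivial element of $\Sigma_2$. A formal sum law in $R$ is $w\in R[2]$ with $p^2_1(w)=p^2_2(w)=1$ and $w^k$ fixed by $\Sigma_{2^k}$ for all $k\ge1$. A formal difference law in $R$ is $r\in R[2]$ such that: (1) $p^2_2(r)=1$ and $s^2_{1,2,1}(r)=0$; (2) $p^2_1(r)\,r=r\,p^2_1(r)=\sigma(r)$ in $R[2]$; (3) for every $k\ge1$, $r^k$ is fixed under the special action of $\Sigma_{2^{k-1}}\times\Sigma_{2^{k-1}}$; (4) for every $k\ge1$, all $1\le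 i<j\le 2^k$ with one of $i,j$ in $A_+$ and the other in $A_-$, and all $1\le l\le 2^k-1$: $s^{2^k}_{i,j,l}(r^k)=d^{2^k-1}_l\,p^{2^k-1}_i\,p^{2^k}_j(r^k)$. *)

theory Defs
  imports Main
begin

text \<open>The pointed set [n] = {0,...,n} is encoded by the natural number n; a pointed
map [n] -> [m] is a function nat => nat with f 0 = 0 and f i <= m for i <= n
(values outside [n] are irrelevant; all structure maps below are required to
depend only on the values on [n]).\<close>

definition pmap :: "nat \<Rightarrow> nat \<Rightarrow> (nat \<Rightarrow> nat) \<Rightarrow> bool" where
  "pmap n m f \<longleftrightarrow> f 0 = 0 \<and> (\<forall>i\<le>n. f i \<le> m)"

text \<open>Morphisms [p] -> [q] of the simplex category (order preserving maps).\<close>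
definition dmap :: "nat \<Rightarrow> nat \<Rightarrow> (nat \<Rightarrow> nat) \<Rightarrow> bool" where
  "dmap p q \<theta> \<longleftrightarrow> (\<forall>i\<le>p. \<theta> i \<le> q) \<and> (\<forall>i j. i \<le> j \<and> j \<le> p \<longrightarrow> \<theta> i \<le> \<theta> j)"

text \<open>Identification [n] smash [m] = [nm], i smash j |-> (j-1)n+i.\<close>
definition smash :: "nat \<Rightarrow> nat \<Rightarrow> nat \<Rightarrow> nat" where
  "smash n i j = (if i = 0 \<or> j = 0 then 0 else (j - 1) * n + i)"

text \<open>The smash product f smash g : [n] smash [m] -> [n'] smash [m'] under these identifications.\<close>
definition smash_map :: "nat \<Rightarrow> nat \<Rightarrow> nat \<Rightarrow> (nat \<Rightarrow> nat) \<Rightarrow> (nat \<Rightarrow> nat) \<Rightarrow> nat \<Rightarrow> nat" where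
  "smash_map n m n' f g = (\<lambda>k. if 1 \<le> k \<and> k \<le> n * m
      then smash n' (f ((k - 1) mod n + 1)) (g ((k - 1) div n + 1)) else 0)"

text \<open>A Gamma-ring with simplices of type 'a:
  cells R n q     = the q-simplices of the pointed simplicial set R[n];
  sop R n q p th  = the simplicial operator th^* : R[n]_q -> R[n]_p for th : [p] -> [q] in Delta;
  base R n q      = the basepoint q-simplex of R[n];
  gmap R n m f q  = R(f) : R[n]_q -> R[m]_q for a pointed map f : [n] -> [m];
  mult R n m q    = multiplication R[n]_q x R[m]_q -> R[nm]_q;
  one R           = the unit 1 in R[1]_0.\<close>
record 'a gamma_ring =
  cells :: "nat \<Rightarrow> nat \<Rightarrow> 'a set"
  sop :: "nat \<Rightarrow> nat \<Rightarrow> nat \<Rightarrow> (nat \<Rightarrow> nat) \<Rightarrow> 'a \<Rightarrow> 'a"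
  base :: "nat \<Rightarrow> nat \<Rightarrow> 'a"
  gmap :: "nat \<Rightarrow> nat \<Rightarrow> (nat \<Rightarrow> nat) \<Rightarrow> nat \<Rightarrow> 'a \<Rightarrow> 'a"
  mult :: "nat \<Rightarrow> nat \<Rightarrow> nat \<Rightarrow> 'a \<Rightarrow> 'a \<Rightarrow> 'a"
  one :: 'a

text \<open>Each R[n] is a pointed simplicial set (a functor Delta^op -> pointed sets).\<close>
definition simplicial_sets :: "'a gamma_ring \<Rightarrow> bool" where
  "simplicial_sets R \<longleftrightarrow>
     (\<forall>n q. base R n q \<in> cells R n q)
   \<and> (\<forall>n q p \<theta> x. dmap p q \<theta> \<and> x \<in> cells R n q \<longrightarrow> sop R n q p \<theta> x \<in> cells R n p)
   \<and> (\<forall>n q x. x \<in> cells R n q \<longrightarrow> sop R n q q id x = x)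
   \<and> (\<forall>n q p u \<theta> \<zeta> x. dmap p q \<theta> \<and> dmap u p \<zeta> \<and> x \<in> cells R n q \<longrightarrow>
        sop R n p u \<zeta> (sop R n q p \<theta> x) = sop R n q u (\<theta> \<circ> \<zeta>) x)
   \<and> (\<forall>n q p \<theta> \<theta>' x. (\<forall>i\<le>p. \<theta> i = \<theta>' i) \<longrightarrow> sop R n q p \<theta> x = sop R n q p \<theta>' x)
   \<and> (\<forall>n q p \<theta>. dmap p q \<theta> \<longrightarrow> sop R n q p \<theta> (base R n q) = base R n p)"

text \<open>R is a Gamma-space: functorial in pointed maps, by maps of pointed simplicial sets,
with R[0] a point.\<close>
definition gamma_space :: "'a gamma_ring \<Rightarrow> bool" where
  "gamma_space R \<longleftrightarrow> simplicial_sets R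
   \<and> (\<forall>n m f q x. pmap n m f \<and> x \<in> cells R n q \<longrightarrow> gmap R n m f q x \<in> cells R m q)
   \<and> (\<forall>n q x. x \<in> cells R n q \<longrightarrow> gmap R n n id q x = x)
   \<and> (\<forall>n m k f g q x. pmap n m f \<and> pmap m k g \<and> x \<in> cells R n q \<longrightarrow>
        gmap R m k g q (gmap R n m f q x) = gmap R n k (g \<circ> f) q x)
   \<and> (\<forall>n m f f' q x. (\<forall>i\<le>n. f i = f' i) \<longrightarrow> gmap R n m f q x = gmap R n m f' q x)
   \<and> (\<forall>n m f q. pmap n m f \<longrightarrow> gmap R n m f q (base R n q) = base R m q)
   \<and> (\<forall>n m f q p \<theta> x. pmap n m f \<and> dmap p q \<theta> \<and> x \<in> cells R n q \<longrightarrow>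
        gmap R n m f p (sop R n q p \<theta> x) = sop R m q p \<theta> (gmap R n m f q x))
   \<and> (\<forall>q. cells R 0 q = {base R 0 q})"

text \<open>The unit 1 in R[1]_q (degeneracy of the vertex 1).\<close>
definition one_at :: "'a gamma_ring \<Rightarrow> nat \<Rightarrow> 'a" where
  "one_at R q = sop R 1 0 q (\<lambda>_. 0) (one R)"

definition gamma_ring :: "'a gamma_ring \<Rightarrow> bool" where
  "gamma_ring R \<longleftrightarrow> gamma_space R
   \<and> one R \<in> cells R 1 0
   \<and> (\<forall>n m q x y. x \<in> cells R n q \<and> y \<in> cells R m q \<longrightarrow> mult R n m q x y \<in> cells R (n * m) q)
   \<and> (\<forall>n m q y. y \<in> cells R m q \<longrightarrow> mult R n m q (base R n q) y = base R (n * m) q)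
   \<and> (\<forall>n m q x. x \<in> cells R n q \<longrightarrow> mult R n m q x (base R m q) = base R (n * m) q)
   \<and> (\<forall>n m q p \<theta> x y. dmap p q \<theta> \<and> x \<in> cells R n q \<and> y \<in> cells R m q \<longrightarrow>
        sop R (n * m) q p \<theta> (mult R n m q x y) = mult R n m p (sop R n q p \<theta> x) (sop R m q p \<theta> y))
   \<and> (\<forall>n m n' m' f g q x y. pmap n n' f \<and> pmap m m' g \<and> x \<in> cells R n q \<and> y \<in> cells R m q \<longrightarrow>
        gmap R (n * m) (n' * m') (smash_map n m n' f g) q (mult R n m q x y)
          = mult R n' m' q (gmap R n n' f q x) (gmap R m m' g q y))
   \<and> (\<forall>n m k q x y z. x \<in> cells R n q \<and> y \<in> cells R m q \<and> z \<in> cells R k q \<longrightarrow>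
        mult R (n * m) k q (mult R n m q x y) z = mult R n (m * k) q x (mult R m k q y z))
   \<and> (\<forall>n q x. x \<in> cells R n q \<longrightarrow> mult R 1 n q (one_at R q) x = x \<and> mult R n 1 q x (one_at R q) = x)"

text \<open>Discrete: every R[n] is a constant simplicial set (all simplicial operators are
bijections; equivalently the degeneracy R[n]_0 -> R[n]_q is bijective for all q).\<close>
definition discrete :: "'a gamma_ring \<Rightarrow> bool" where
  "discrete R \<longleftrightarrow> (\<forall>n q. bij_betw (sop R n 0 q (\<lambda>_. 0)) (cells R n 0) (cells R n q))"

primrec rpow :: "'a gamma_ring \<Rightarrow> 'a \<Rightarrow> nat \<Rightarrow> 'a" where
  "rpow R x 0 = one R"
| "rpow R x (Suc k) = mult R (2 ^ k) 2 0 (rpow R x k) x"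

definition pp :: "nat \<Rightarrow> nat \<Rightarrow> nat \<Rightarrow> nat" where
  "pp n i = (\<lambda>j. if j < i then j else if j = i then 0 else j - 1)"

definition ss :: "nat \<Rightarrow> nat \<Rightarrow> nat \<Rightarrow> nat \<Rightarrow> nat \<Rightarrow> nat" where
  "ss n i j k = (\<lambda>l. if l = 0 then 0 else if l = i \<or> l = j then k else
      (let r = l - (if i < l then 1 else 0) - (if j < l then 1 else 0)
       in if r < k then r else r + 1))"

definition dd :: "nat \<Rightarrow> nat \<Rightarrow> nat \<Rightarrow> nat" where
  "dd n j = (\<lambda>l. if l < j then l else l + 1)"

definition swap2 :: "nat \<Rightarrow> nat" where
  "swap2 = (\<lambda>l. if l = 1 then 2 else if l = 2 then 1 else l)"

text \<open>Permutations of {1..n}, extended by 0 |-> 0 (the Sigma_n action).\<close>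
definition perm_of :: "nat \<Rightarrow> (nat \<Rightarrow> nat) \<Rightarrow> bool" where
  "perm_of n \<pi> \<longleftrightarrow> \<pi> 0 = 0 \<and> bij_betw \<pi> {1..n} {1..n}"

fun bitcount :: "nat \<Rightarrow> nat" where
  "bitcount n = (if n = 0 then 0 else n mod 2 + bitcount (n div 2))"

definition Aplus :: "nat \<Rightarrow> nat set" where
  "Aplus k = {i \<in> {1..2 ^ k}. even (bitcount (i - 1))}"

definition Aminus :: "nat \<Rightarrow> nat set" where
  "Aminus k = {i \<in> {1..2 ^ k}. odd (bitcount (i - 1))}"

definition special_perm :: "nat \<Rightarrow> (nat \<Rightarrow> nat) \<Rightarrow> bool" where
  "special_perm k \<pi> \<longleftrightarrow> perm_of (2 ^ k) \<pi> \<and> \<pi> ` Aplus k = Aplus k \<and> \<pi> ` Aminus k = Aminus k"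

definition formal_sum_law :: "'a gamma_ring \<Rightarrow> 'a \<Rightarrow> bool" where
  "formal_sum_law R w \<longleftrightarrow> w \<in> cells R 2 0
   \<and> gmap R 2 1 (pp 2 1) 0 w = one R \<and> gmap R 2 1 (pp 2 2) 0 w = one R
   \<and> (\<forall>k\<ge>1. \<forall>\<pi>. perm_of (2 ^ k) \<pi> \<longrightarrow> gmap R (2 ^ k) (2 ^ k) \<pi> 0 (rpow R w k) = rpow R w k)"

definition formal_difference_law :: "'a gamma_ring \<Rightarrow> 'a \<Rightarrow> bool" where
  "formal_difference_law R r \<longleftrightarrow> r \<in> cells R 2 0
   \<and> gmap R 2 1 (pp 2 2) 0 r = one R \<and> gmap R 2 1 (ss 2 1 2 1) 0 r = base R 1 0
   \<and> mult R 1 2 0 (gmap R 2 1 (pp 2 1) 0 r) r = gmap R 2 2 swap2 0 r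
   \<and> mult R 2 1 0 r (gmap R 2 1 (pp 2 1) 0 r) = gmap R 2 2 swap2 0 r
   \<and> (\<forall>k\<ge>1. \<forall>\<pi>. special_perm k \<pi> \<longrightarrow> gmap R (2 ^ k) (2 ^ k) \<pi> 0 (rpow R r k) = rpow R r k)
   \<and> (\<forall>k\<ge>1. \<forall>i j l. 1 \<le> i \<and> i < j \<and> j \<le> 2 ^ k
        \<and> ((i \<in> Aplus k \<and> j \<in> Aminus k) \<or> (i \<in> Aminus k \<and> j \<in> Aplus k))
        \<and> 1 \<le> l \<and> l \<le> 2 ^ k - 1 \<longrightarrow>
        gmap R (2 ^ k) (2 ^ k - 1) (ss (2 ^ k) i j l) 0 (rpow R r k)
        = gmap R (2 ^ k - 2) (2 ^ k - 1) (dd (2 ^ k - 1) l) 0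
            (gmap R (2 ^ k - 1) (2 ^ k - 2) (pp (2 ^ k - 1) i) 0
              (gmap R (2 ^ k) (2 ^ k - 1) (pp (2 ^ k) j) 0 (rpow R r k))))"

text \<open>H C[n] for C = nat (HN) or int (HZ): functions {1..n} -> C, encoded as
nat => C vanishing at 0 and above n.\<close>
definition hcarrier :: "nat \<Rightarrow> (nat \<Rightarrow> 'c::zero) set" where
  "hcarrier n = {x. x 0 = 0 \<and> (\<forall>i>n. x i = 0)}"

definition hmap :: "nat \<Rightarrow> nat \<Rightarrow> (nat \<Rightarrow> nat) \<Rightarrow> (nat \<Rightarrow> 'c::comm_monoid_add) \<Rightarrow> nat \<Rightarrow> 'c" where
  "hmap n m f x = (\<lambda>j. if 1 \<le> j \<and> j \<le> m then (\<Sum>i\<in>{i\<in>{1..n}. f i = j}. x i) else 0)"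

definition hmult :: "nat \<Rightarrow> nat \<Rightarrow> (nat \<Rightarrow> 'c::semiring_0) \<Rightarrow> (nat \<Rightarrow> 'c) \<Rightarrow> nat \<Rightarrow> 'c" where
  "hmult n m x y = (\<lambda>k. if 1 \<le> k \<and> k \<le> n * m then x ((k - 1) mod n + 1) * y ((k - 1) div n + 1) else 0)"

definition hunit :: "nat \<Rightarrow> 'c::{zero,one}" where
  "hunit = (\<lambda>i. if i = 1 then 1 else 0)"

definition ones :: "nat \<Rightarrow> nat \<Rightarrow> nat" where
  "ones n = (\<lambda>i. if 1 \<le> i \<and> i \<le> n then 1 else 0)"

text \<open>pm1 n = (1,-1)^n in HZ[2^n].\<close>
primrec pm1 :: "nat \<Rightarrow> nat \<Rightarrow> int" where
  "pm1 0 = hunit"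
| "pm1 (Suc k) = hmult (2 ^ k) 2 (pm1 k) (\<lambda>i. if i = 1 then 1 else if i = 2 then -1 else 0)"

text \<open>A map of Gamma-rings H C -> R into a discrete R, given on vertices (for discrete
R and the discrete H C, a map of Gamma-spaces is the same as a family of maps on
vertices): natural, pointed, unital and multiplicative.\<close>
definition hring_map :: "'a gamma_ring \<Rightarrow> (nat \<Rightarrow> (nat \<Rightarrow> 'c::comm_semiring_1) \<Rightarrow> 'a) \<Rightarrow> bool" where
  "hring_map R \<phi> \<longleftrightarrow>
     (\<forall>n x. x \<in> hcarrier n \<longrightarrow> \<phi> n x \<in> cells R n 0)
   \<and> (\<forall>n m f x. pmap n m f \<and> x \<in> hcarrier n \<longrightarrow> \<phi> m (hmap n m f x) = gmap R n m f 0 (\<phi> n x))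
   \<and> (\<forall>n. \<phi> n (\<lambda>_. 0) = base R n 0)
   \<and> \<phi> 1 hunit = one R
   \<and> (\<forall>n m x y. x \<in> hcarrier n \<and> y \<in> hcarrier m \<longrightarrow>
        \<phi> (n * m) (hmult n m x y) = mult R n m 0 (\<phi> n x) (\<phi> m y))"

end

theory Submission
  imports Defs
begin


declare bitcount.simps[simp del]

context fixes R :: "'a gamma_ring" assumes G: "gamma_ring R"
begin

lemma gm_cells: "pmap n m f \<Longrightarrow> x \<in> cells R n q \<Longrightarrow> gmap R n m f q x \<in> cells R m q"
  using G unfolding gamma_ring_def gamma_space_def by auto
lemma gm_id: "x \<in> cells R n q \<Longrightarrow> gmap R n n id q x = x"
  using G unfolding gamma_ring_def gamma_space_def by auto
lemma gm_comp: "pmap n m f \<Longrightarrow> pmap m k g \<Longrightarrow> x \<in> cells R n q \<Longrightarrow>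
   gmap R m k g q (gmap R n m f q x) = gmap R n k (g \<circ> f) q x"
  using G unfolding gamma_ring_def gamma_space_def by auto
lemma gm_cong: "(\<And>i. i \<le> n \<Longrightarrow> f i = f' i) \<Longrightarrow> gmap R n m f q x = gmap R n m f' q x"
  using G unfolding gamma_ring_def gamma_space_def by auto
lemma one_cells: "one R \<in> cells R 1 0"
  using G unfolding gamma_ring_def by auto
lemma mult_cells: "x \<in> cells R n q \<Longrightarrow> y \<in> cells R m q \<Longrightarrow> mult R n m q x y \<in> cells R (n * m) q"
  using G unfolding gamma_ring_def by auto
lemma mult_nat: "pmap n n' f \<Longrightarrow> pmap m m' g \<Longrightarrow> x \<in> cells R n q \<Longrightarrow> y \<in> cells R m q \<Longrightarrow>
        gmap R (n * m) (n' * m') (smash_map n m n' f g) q (mult R n m q x y)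
          = mult R n' m' q (gmap R n n' f q x) (gmap R m m' g q y)"
  using G unfolding gamma_ring_def by auto
lemma mult_assoc: "x \<in> cells R n q \<Longrightarrow> y \<in> cells R m q \<Longrightarrow> z \<in> cells R k q \<Longrightarrow>
        mult R (n * m) k q (mult R n m q x y) z = mult R n (m * k) q x (mult R m k q y z)"
  using G unfolding gamma_ring_def by auto
lemma one_at0: "one_at R 0 = one R"
proof -
  have s: "simplicial_sets R" using G unfolding gamma_ring_def gamma_space_def by auto
  have "sop R 1 0 0 (\<lambda>_. 0) (one R) = sop R 1 0 0 id (one R)"
    using s unfolding simplicial_sets_def by (metis id_apply le_zero_eq)
  also have "\<dots> = one R" using s one_cells unfolding simplicial_sets_def by blast
  finally show ?thesis unfolding one_at_def .
qed
lemma unit_l: "x \<in> cells R n 0 \<Longrightarrow> mult R 1 n 0 (one R) x = x"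
  using G one_at0 unfolding gamma_ring_def by metis
lemma unit_r: "x \<in> cells R n 0 \<Longrightarrow> mult R n 1 0 x (one R) = x"
  using G one_at0 unfolding gamma_ring_def by metis

lemma rpow_cells: "x \<in> cells R 2 0 \<Longrightarrow> rpow R x k \<in> cells R (2^k) 0"
proof (induction k)
  case 0 then show ?case using one_cells by simp
next
  case (Suc k)
  have "mult R (2^k) 2 0 (rpow R x k) x \<in> cells R (2^k * 2) 0"
    using mult_cells Suc by blast
  then show ?case by (simp add: mult.commute)
qed

lemma rpow1: "x \<in> cells R 2 0 \<Longrightarrow> rpow R x 1 = x"
  using unit_l by simp

lemma rpow_left: "x \<in> cells R 2 0 \<Longrightarrow> rpow R x (Suc k) = mult R 2 (2^k) 0 x (rpow R x k)"
proof (induction k)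
  case 0 then show ?case using unit_l unit_r by simp
next
  case (Suc k)
  have c: "rpow R x k \<in> cells R (2^k) 0" using rpow_cells Suc by blast
  have "rpow R x (Suc (Suc k)) = mult R (2 * 2^k) 2 0 (mult R 2 (2^k) 0 x (rpow R x k)) x"
    using Suc by simp
  also have "\<dots> = mult R 2 (2^k * 2) 0 x (mult R (2^k) 2 0 (rpow R x k) x)"
    using mult_assoc[OF Suc.prems c Suc.prems] by simp
  also have "\<dots> = mult R 2 (2^Suc k) 0 x (rpow R x (Suc k))"
    by (simp add: mult.commute)
  finally show ?case .
qed

lemma rpow_2: "x \<in> cells R 2 0 \<Longrightarrow> rpow R x 2 = mult R 2 2 0 x x"
  using rpow1[of x] by (simp add: numeral_2_eq_2)

lemma rpow_SS: "x \<in> cells R 2 0 \<Longrightarrow>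
   rpow R x (Suc (Suc k)) = mult R 4 (2^k) 0 (rpow R x 2) (rpow R x k)"
proof -
  assume x: "x \<in> cells R 2 0"
  have c: "rpow R x k \<in> cells R (2^k) 0" using rpow_cells x by blast
  have "rpow R x (Suc (Suc k)) = mult R 2 (2 * 2^k) 0 x (mult R 2 (2^k) 0 x (rpow R x k))"
    using rpow_left[OF x, of "Suc k"] rpow_left[OF x, of k] by simp
  also have "\<dots> = mult R (2*2) (2^k) 0 (mult R 2 2 0 x x) (rpow R x k)"
    using mult_assoc[OF x x c] by simp
  finally show ?thesis using rpow_2[OF x] by simp
qed

end



definition c4 :: "nat \<Rightarrow> nat" where "c4 = pp 3 2 \<circ> pp 4 2"

lemma c4_vals: "c4 0 = 0" "c4 (Suc 0) = 1" "c4 (Suc 3) = 2" "c4 1 = 1" "c4 2 = 0" "c4 3 = 0" "c4 4 = 2"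
  by (simp_all add: c4_def pp_def)

lemma c4_le: "d < 4 \<Longrightarrow> c4 (d+1) \<le> 2"
  by (cases d; cases "d - 1"; cases "d-2"; cases "d-3"; auto simp: c4_def pp_def)

lemma c4_cases: "d < 4 \<Longrightarrow> c4 (d+1) \<noteq> 0 \<Longrightarrow> (d = 0 \<and> c4 (d+1) = 1) \<or> (d = 3 \<and> c4 (d+1) = 2)"
  by (cases d; cases "d - 1"; cases "d-2"; cases "d-3"; auto simp: c4_def pp_def)

fun e :: "nat \<Rightarrow> nat" where
  "e m = (if m = 0 then 0 else 3 * (m mod 2) + 4 * e (m div 2))"
declare e.simps[simp del]

lemma e_eq: "e m = 3 * (m mod 2) + 4 * e (m div 2)"
  by (cases "m = 0") (simp_all add: e.simps[of m] e.simps[of 0])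

lemma bc_eq: "bitcount n = n mod 2 + bitcount (n div 2)"
  by (cases "n = 0") (simp_all add: bitcount.simps[of n] bitcount.simps[of 0])

lemma bc_e: "bitcount (e m) = 2 * bitcount m"
proof (induction m rule: less_induct)
  case (less m)
  show ?case
  proof (cases "m = 0")
    case True then show ?thesis by (simp add: e.simps bitcount.simps)
  next
    case False
    then have IH: "bitcount (e (m div 2)) = 2 * bitcount (m div 2)" using less by simp
    have "m mod 2 = 0 \<or> m mod 2 = 1" by auto
    then have "bitcount (3 * (m mod 2) + 4 * e (m div 2)) = 2 * (m mod 2) + bitcount (e (m div 2))"
    proof
      assume h: "m mod 2 = 0"
      show ?thesis using h bc_eq[of "4 * e (m div 2)"] bc_eq[of "2 * e (m div 2)"] by simp
    next
      assume h: "m mod 2 = 1"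
      have "(3 + 4 * e (m div 2)) div 2 = 1 + 2 * e (m div 2)" "(3 + 4 * e (m div 2)) mod 2 = 1" by presburger+
      then show ?thesis using h bc_eq[of "3 + 4 * e (m div 2)"] bc_eq[of "1 + 2 * e (m div 2)"] by simp
    qed
    then show ?thesis using IH e_eq[of m] bc_eq[of m] by simp
  qed
qed

primrec C :: "nat \<Rightarrow> nat \<Rightarrow> nat" where
  "C 0 = id"
| "C (Suc k) = smash_map 4 (2^(2*k)) 2 c4 (C k)"

lemma pow4: "(2::nat)^(2 * Suc k) = 4 * 2^(2*k)"
  by (simp add: power_add)

lemma C_props:
  "C k 0 = 0 \<and> (\<forall>t \<le> 2^(2*k). C k t \<le> 2^k)
   \<and> (\<forall>t. 1 \<le> t \<and> t \<le> 2^(2*k) \<and> C k t \<noteq> 0 \<longrightarrow> t = e (C k t - 1) + 1)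
   \<and> (\<forall>m < 2^k. e m + 1 \<le> 2^(2*k) \<and> C k (e m + 1) = m + 1)"
proof (induction k)
  case 0 then show ?case by (auto simp: e.simps)
next
  case (Suc k)
  define N where "N = (2::nat)^(2*k)"
  have N1: "N \<ge> 1" unfolding N_def by simp
  have CS: "C (Suc k) t = (if 1 \<le> t \<and> t \<le> 4 * N then
      smash 2 (c4 ((t - 1) mod 4 + 1)) (C k ((t - 1) div 4 + 1)) else 0)" for t
    by (simp add: smash_map_def N_def)
  have IH0: "C k 0 = 0" using Suc by blast
  have IH1: "\<And>t. t \<le> N \<Longrightarrow> C k t \<le> 2^k" using Suc unfolding N_def by blast
  have IH2: "\<And>t. 1 \<le> t \<Longrightarrow> t \<le> N \<Longrightarrow> C k t \<noteq> 0 \<Longrightarrow> t = e (C k t - 1) + 1"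
    using Suc unfolding N_def by blast
  have IH3: "\<And>m. m < 2^k \<Longrightarrow> e m + 1 \<le> N \<and> C k (e m + 1) = m + 1"
    using Suc unfolding N_def by blast
  have qb: "(t - 1) div 4 + 1 \<le> N" if "1 \<le> t" "t \<le> 4 * N" for t
    using that by (simp add: Suc_leI div_less_iff_less_mult less_le_trans)
  have P0: "C (Suc k) 0 = 0" using CS by simp
  have P1: "C (Suc k) t \<le> 2^Suc k" if "t \<le> 2^(2 * Suc k)" for t
  proof -
    have t: "t \<le> 4 * N" using that pow4 N_def by simp
    show ?thesis
    proof (cases "1 \<le> t")
      case True
      let ?i = "c4 ((t - 1) mod 4 + 1)" and ?j = "C k ((t - 1) div 4 + 1)"
      have i: "?i \<le> 2" using c4_le by simp
      have j: "?j \<le> 2^k" using IH1 qb[OF True t] by blast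
      have ar: "\<And>i j p::nat. j \<le> p \<Longrightarrow> 0 < j \<Longrightarrow> i \<le> 2 \<Longrightarrow> (j-1)*2+i \<le> 2*p"
        by (case_tac j) auto
      have "smash 2 ?i ?j \<le> 2 * 2^k"
        using i j ar by (auto simp: smash_def)
      then show ?thesis using CS True t by simp
    next
      case False then show ?thesis using CS by simp
    qed
  qed
  have P2: "t = e (C (Suc k) t - 1) + 1" if "1 \<le> t" "t \<le> 2^(2*Suc k)" "C (Suc k) t \<noteq> 0" for t
  proof -
    have t: "t \<le> 4 * N" using that pow4 N_def by simp
    define d where "d = (t - 1) mod 4"
    define q where "q = (t - 1) div 4"
    have dq: "t - 1 = d + 4 * q" unfolding d_def q_def by simp
    have v: "C (Suc k) t = smash 2 (c4 (d + 1)) (C k (q + 1))"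
      using CS that t d_def q_def by simp
    have nz: "c4 (d+1) \<noteq> 0 \<and> C k (q+1) \<noteq> 0" using that(3) unfolding v smash_def by (simp split: if_splits)
    then have nz: "c4 (d+1) \<noteq> 0" "C k (q+1) \<noteq> 0" by auto
    have v2: "C (Suc k) t = (C k (q + 1) - 1) * 2 + c4 (d+1)" using v nz by (simp add: smash_def)
    have q1: "q + 1 = e (C k (q+1) - 1) + 1" using IH2[OF _ qb[OF that(1) t]] nz q_def by simp
    define M where "M = C k (q+1) - 1"
    have d4: "d < 4" unfolding d_def by simp
    from c4_cases[OF d4 nz(1)] have "e (C (Suc k) t - 1) = d + 4 * q"
    proof
      assume h: "d = 0 \<and> c4 (d + 1) = 1"
      then have "C (Suc k) t - 1 = 2 * M" using v2 M_def by (simp add: c4_vals)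
      then show ?thesis using e_eq[of "2*M"] h q1 M_def by simp
    next
      assume h: "d = 3 \<and> c4 (d + 1) = 2"
      then have "C (Suc k) t - 1 = 2 * M + 1" using v2 M_def by (simp add: c4_vals)
      then show ?thesis using e_eq[of "2*M+1"] h q1 M_def by simp
    qed
    then show ?thesis using dq that(1) by simp
  qed
  have P3: "e m + 1 \<le> 2^(2*Suc k) \<and> C (Suc k) (e m + 1) = m + 1" if "m < 2^Suc k" for m
  proof -
    have md: "m div 2 < 2^k" using that by simp
    from IH3[OF md] have a: "e (m div 2) + 1 \<le> N" "C k (e (m div 2) + 1) = m div 2 + 1" by auto
    have em: "e m = 3 * (m mod 2) + 4 * e (m div 2)" by (rule e_eq)
    have b: "m mod 2 = 0 \<or> m mod 2 = 1" by auto
    have le: "e m + 1 \<le> 4 * N" using em a(1) b by auto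
    have md4: "e m mod 4 = 3 * (m mod 2)" "e m div 4 = e (m div 2)" using em b by auto
    have c4v: "c4 (3 * (m mod 2) + 1) = m mod 2 + 1" using b c4_vals by auto
    have "C (Suc k) (e m + 1) = smash 2 (m mod 2 + 1) (m div 2 + 1)"
      using CS[of "e m + 1"] le md4 c4v a(2) by simp
    also have "\<dots> = m + 1" by (simp add: smash_def)
    finally show ?thesis using le pow4 N_def by simp
  qed
  show ?case using P0 P1 P2 P3 by blast
qed




lemma lift_perm:
  assumes p: "perm_of (2^k) \<pi>"
  shows "\<exists>\<pi>'. special_perm (2*k) \<pi>' \<and> (\<forall>t \<le> 2^(2*k). \<pi> (C k t) = C k (\<pi>' t))"
proof -
  define N where "N = (2::nat)^(2*k)"
  have CP: "C k 0 = 0" "\<And>t. t \<le> N \<Longrightarrow> C k t \<le> 2^k"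
    "\<And>t. 1 \<le> t \<Longrightarrow> t \<le> N \<Longrightarrow> C k t \<noteq> 0 \<Longrightarrow> t = e (C k t - 1) + 1"
    "\<And>m. m < 2^k \<Longrightarrow> e m + 1 \<le> N \<and> C k (e m + 1) = m + 1"
    using C_props[of k] unfolding N_def by blast+
  have p0: "\<pi> 0 = 0" and pb: "bij_betw \<pi> {1..2^k} {1..2^k}" using p unfolding perm_of_def by auto
  have pin: "\<And>s. s \<in> {1..2^k} \<Longrightarrow> \<pi> s \<in> {1..2^k}" using pb bij_betwE by blast
  have pinj: "inj_on \<pi> {1..2^k}" using pb bij_betw_imp_inj_on by blast
  define \<pi>' where "\<pi>' t = (if C k t \<noteq> 0 then e (\<pi> (C k t) - 1) + 1 else t)" for t
  have Cin: "C k t \<in> {1..2^k}" if "t \<le> N" "C k t \<noteq> 0" for t using CP(2)[OF that(1)] that(2) by auto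
  have K1: "1 \<le> \<pi>' t \<and> \<pi>' t \<le> N \<and> C k (\<pi>' t) = \<pi> (C k t)" if "t \<le> N" "C k t \<noteq> 0" for t
  proof -
    have "\<pi> (C k t) \<in> {1..2^k}" using pin Cin that by blast
    then have "\<pi> (C k t) - 1 < 2^k" by auto
    from CP(4)[OF this] show ?thesis using \<open>\<pi> (C k t) \<in> {1..2^k}\<close> that unfolding \<pi>'_def by auto
  qed
  have eq: "\<pi> (C k t) = C k (\<pi>' t)" if "t \<le> N" for t
  proof (cases "C k t = 0")
    case True then show ?thesis using p0 unfolding \<pi>'_def by simp
  next
    case False then show ?thesis using K1 that by simp
  qed
  have maps: "\<pi>' t \<in> {1..N}" if "t \<in> {1..N}" for t
    using K1 that unfolding \<pi>'_def by (cases "C k t = 0") auto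
  have inj: "inj_on \<pi>' {1..N}"
  proof (rule inj_onI)
    fix s t assume s: "s \<in> {1..N}" and t: "t \<in> {1..N}" and st: "\<pi>' s = \<pi>' t"
    show "s = t"
    proof (cases "C k s = 0"; cases "C k t = 0")
      assume "C k s = 0" "C k t = 0" then show ?thesis using st unfolding \<pi>'_def by simp
    next
      assume a: "C k s = 0" "C k t \<noteq> 0"
      have "C k (\<pi>' t) = \<pi> (C k t)" using K1 t a by auto
      moreover have "\<pi> (C k t) \<in> {1..2^k}" using pin Cin t a by auto
      ultimately have "C k (\<pi>' t) \<noteq> 0" by auto
      moreover have "\<pi>' s = s" using a unfolding \<pi>'_def by simp
      ultimately show ?thesis using st a by simp
    next
      assume a: "C k s \<noteq> 0" "C k t = 0"
      have "C k (\<pi>' s) = \<pi> (C k s)" using K1 s a by auto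
      moreover have "\<pi> (C k s) \<in> {1..2^k}" using pin Cin s a by auto
      ultimately have "C k (\<pi>' s) \<noteq> 0" by auto
      moreover have "\<pi>' t = t" using a unfolding \<pi>'_def by simp
      ultimately show ?thesis using st a by simp
    next
      assume a: "C k s \<noteq> 0" "C k t \<noteq> 0"
      then have "\<pi> (C k s) = \<pi> (C k t)" using K1 s t st by (metis atLeastAtMost_iff)
      then have "C k s = C k t" using pinj Cin a s t by (meson atLeastAtMost_iff inj_on_eq_iff)
      then show ?thesis using CP(3) a s t by (metis atLeastAtMost_iff)
    qed
  qed
  have img: "\<pi>' ` {1..N} = {1..N}"
    by (rule endo_inj_surj) (use maps inj in auto)
  have even_K: "even (bitcount (\<pi>' t - 1))" if "t \<in> {1..N}" "C k t \<noteq> 0" for t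
    using that unfolding \<pi>'_def by (simp add: bc_e)
  have AP: "Aplus (2*k) = {i \<in> {1..N}. even (bitcount (i - 1))}"
       "Aminus (2*k) = {i \<in> {1..N}. odd (bitcount (i - 1))}"
    unfolding Aplus_def Aminus_def N_def by auto
  have subP: "\<pi>' ` Aplus (2*k) \<subseteq> Aplus (2*k)"
  proof
    fix y assume "y \<in> \<pi>' ` Aplus (2*k)"
    then obtain t where t: "t \<in> Aplus (2*k)" "y = \<pi>' t" by auto
    show "y \<in> Aplus (2*k)"
    proof (cases "C k t = 0")
      case True then show ?thesis using t unfolding \<pi>'_def by simp
    next
      case False then show ?thesis using t maps even_K unfolding AP by auto
    qed
  qed
  have subM: "\<pi>' ` Aminus (2*k) \<subseteq> Aminus (2*k)"
  proof
    fix y assume "y \<in> \<pi>' ` Aminus (2*k)"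
    then obtain t where t: "t \<in> Aminus (2*k)" "y = \<pi>' t" by auto
    have tt: "t \<in> {1..N}" "odd (bitcount (t - 1))" using t unfolding AP by auto
    have "C k t = 0"
    proof (rule ccontr)
      assume "C k t \<noteq> 0"
      then have "t = e (C k t - 1) + 1" using CP(3) tt by auto
      then have "even (bitcount (t - 1))" by (metis add_diff_cancel_right' bc_e even_mult_iff even_numeral)
      then show False using tt by simp
    qed
    then show "y \<in> Aminus (2*k)" using t unfolding \<pi>'_def by simp
  qed
  have fin: "finite (Aplus (2*k))" "finite (Aminus (2*k))" unfolding AP by simp_all
  have injP: "inj_on \<pi>' (Aplus (2*k))" "inj_on \<pi>' (Aminus (2*k))"
    using inj_on_subset[OF inj] unfolding AP by (metis (no_types, lifting) mem_Collect_eq subsetI)+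
  have "\<pi>' ` Aplus (2*k) = Aplus (2*k)" by (rule endo_inj_surj[OF fin(1) subP injP(1)])
  moreover have "\<pi>' ` Aminus (2*k) = Aminus (2*k)" by (rule endo_inj_surj[OF fin(2) subM injP(2)])
  moreover have "perm_of (2^(2*k)) \<pi>'"
    unfolding perm_of_def N_def[symmetric] using CP(1) inj img
    by (auto simp: \<pi>'_def bij_betw_def)
  ultimately have "special_perm (2*k) \<pi>'" unfolding special_perm_def by simp
  then show ?thesis using eq unfolding N_def by blast
qed




lemma le2: "(i::nat) \<le> 2 \<Longrightarrow> i = 0 \<or> i = 1 \<or> i = 2" by auto
lemma le4: "(i::nat) \<le> 4 \<Longrightarrow> i = 0 \<or> i = 1 \<or> i = 2 \<or> i = 3 \<or> i = 4" by auto

lemma pm_pp21: "pmap 2 1 (pp 2 1)" and pm_pp22: "pmap 2 1 (pp 2 2)"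
  and pm_swap: "pmap 2 2 swap2" and pm_id: "pmap n n id"
  and pm_pp42: "pmap 4 3 (pp 4 2)" and pm_pp32: "pmap 3 2 (pp 3 2)"
  by (auto simp: pmap_def pp_def swap2_def)

lemma pm_c4: "pmap 4 2 c4"
  unfolding pmap_def using c4_vals by (auto dest!: le4)

lemma perm_pmap: "perm_of n \<pi> \<Longrightarrow> pmap n n \<pi>"
proof -
  assume p: "perm_of n \<pi>"
  have "\<pi> i \<le> n" if "i \<le> n" for i
  proof (cases "i = 0")
    case True then show ?thesis using p unfolding perm_of_def by simp
  next
    case False then have "i \<in> {1..n}" using that by simp
    then have "\<pi> i \<in> {1..n}" using p unfolding perm_of_def using bij_betwE by blast
    then show ?thesis by simp
  qed
  then show ?thesis using p unfolding pmap_def perm_of_def by simp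
qed

lemma C_pmap: "pmap (2^(2*k)) (2^k) (C k)"
  using C_props[of k] unfolding pmap_def by blast




lemma hmult_hc: "hmult n m x y \<in> hcarrier (n * m)"
  unfolding hcarrier_def hmult_def by auto

lemma ones_hc: "ones n \<in> hcarrier n"
  unfolding hcarrier_def ones_def by auto

lemma int_hc: "x \<in> hcarrier n \<Longrightarrow> int \<circ> x \<in> hcarrier n"
  unfolding hcarrier_def by auto

lemma int_hmap: "int \<circ> hmap n m f x = hmap n m f (int \<circ> x)"
  unfolding hmap_def by (auto simp: fun_eq_iff)

lemma int_hmult: "int \<circ> hmult n m x y = hmult n m (int \<circ> x) (int \<circ> y)"
  unfolding hmult_def by (auto simp: fun_eq_iff)

lemma int_hunit: "int \<circ> hunit = hunit"
  unfolding hunit_def by (auto simp: fun_eq_iff)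

lemma ones_1: "ones 1 = hunit"
  unfolding ones_def hunit_def by (auto simp: fun_eq_iff)

lemma ones_double: assumes "n \<ge> 1" shows "ones (n * 2) = hmult n 2 (ones n) (ones 2)"
proof -
  have "(t - 1) div n + 1 \<le> 2" if "1 \<le> t" "t \<le> n * 2" for t
  proof -
    have "t - 1 < n * 2" using that by simp
    then have "(t - 1) div n < 2" by (simp add: div_less_iff_less_mult assms)
    then show ?thesis by simp
  qed
  moreover have "(t - 1) mod n + 1 \<le> n" for t
    using mod_less_divisor[of n "t - 1"] assms by linarith
  ultimately show ?thesis unfolding ones_def hmult_def by (auto simp: fun_eq_iff)
qed

lemma decomp:
  fixes x :: "nat \<Rightarrow> nat"
  assumes x: "x \<in> hcarrier n" and n: "n \<ge> 1"
  shows "\<exists>K f. pmap (2^K) n f \<and> hmap (2^K) n f (ones (2^K)) = x"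
proof -
  define M where "M = sum x {1..n}"
  define K where "K = n * M"
  define f where "f t = (if 1 \<le> t \<and> (t - 1) div n < x ((t - 1) mod n + 1) then (t - 1) mod n + 1 else 0)" for t
  have modb: "(t - 1) mod n + 1 \<le> n" for t
    using mod_less_divisor[of n "t - 1"] n by linarith
  have pm: "pmap (2^K) n f" unfolding pmap_def f_def using modb by auto
  have KK: "K < 2^K" by (rule less_exp)
  have fib: "{t \<in> {1..2^K}. f t = j} = (\<lambda>l. l * n + j) ` {..<x j}" if j: "1 \<le> j" "j \<le> n" for j
  proof
    show "{t \<in> {1..2^K}. f t = j} \<subseteq> (\<lambda>l. l * n + j) ` {..<x j}"
    proof
      fix t assume "t \<in> {t \<in> {1..2^K}. f t = j}"
      then have t: "1 \<le> t" "f t = j" by auto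
      then have c: "(t - 1) div n < x ((t - 1) mod n + 1)" "(t - 1) mod n + 1 = j"
        using j unfolding f_def by (auto split: if_splits)
      have "t = ((t - 1) div n) * n + j" using div_mult_mod_eq[of "t - 1" n] c(2) t(1) by arith
      then show "t \<in> (\<lambda>l. l * n + j) ` {..<x j}" using c by auto
    qed
  next
    show "(\<lambda>l. l * n + j) ` {..<x j} \<subseteq> {t \<in> {1..2^K}. f t = j}"
    proof
      fix t assume "t \<in> (\<lambda>l. l * n + j) ` {..<x j}"
      then obtain l where l: "l < x j" "t = l * n + j" by auto
      have xj: "x j \<le> M" unfolding M_def using j by (intro member_le_sum) auto
      have "l * n + j \<le> x j * n"
      proof -
        have "Suc l \<le> x j" using l by simp
        then have "Suc l * n \<le> x j * n" by (rule mult_right_mono) simp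
        then show ?thesis using j by simp
      qed
      also have "\<dots> \<le> K" unfolding K_def using xj by (simp add: mult.commute)
      finally have tK: "t \<le> 2^K" using KK l(2) by linarith
      have e1: "t - 1 = l * n + (j - 1)" using l j by simp
      have md: "(l * n + d) mod n = d \<and> (l * n + d) div n = l" if "d < n" for d
        using that by simp
      have m1: "(l * n + (j - 1)) mod n = j - 1" "(l * n + (j - 1)) div n = l"
        using md[of "j - 1"] j by linarith+
      have "(t - 1) mod n = j - 1" "(t - 1) div n = l" using m1 e1 by metis+
      then have "f t = j" unfolding f_def using l j by auto
      then show "t \<in> {t \<in> {1..2^K}. f t = j}" using tK l j by auto
    qed
  qed
  have "hmap (2^K) n f (ones (2^K)) = x"
  proof
    fix j
    show "hmap (2^K) n f (ones (2^K)) j = x j"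
    proof (cases "1 \<le> j \<and> j \<le> n")
      case True
      have "hmap (2^K) n f (ones (2^K)) j = (\<Sum>i\<in>{t \<in> {1..2^K}. f t = j}. ones (2^K) i)"
        unfolding hmap_def using True by simp
      also have "\<dots> = (\<Sum>i\<in>{t \<in> {1..2^K}. f t = j}. 1)"
        by (rule sum.cong) (auto simp: ones_def)
      also have "\<dots> = card ((\<lambda>l. l * n + j) ` {..<x j})" using fib True by simp
      also have "\<dots> = x j" using n by (subst card_image) (auto simp: inj_on_def)
      finally show ?thesis .
    next
      case False
      then have "x j = 0" using x unfolding hcarrier_def by (cases "j = 0") auto
      then show ?thesis unfolding hmap_def using if_not_P[OF False] by metis
    qed
  qed
  then show ?thesis using pm by blast
qed

lemma pm1_hc: "pm1 k \<in> hcarrier (2^k)"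
proof (cases k)
  case 0 then show ?thesis by (simp add: hcarrier_def hunit_def)
next
  case (Suc k') then show ?thesis using hmult_hc[of "2^k'" 2] by (simp add: mult.commute)
qed

lemma int_ones2: "int \<circ> ones 2 = hmap 4 2 c4 (pm1 2)"
proof
  fix j
  have s1: "{i \<in> {1..4::nat}. c4 i = 1} = {1}"
  proof -
    have "i = 1" if "i \<in> {1..4::nat}" "c4 i = 1" for i
      using that le4[of i] c4_vals by auto
    then show ?thesis using c4_vals by auto
  qed
  have s2: "{i \<in> {1..4::nat}. c4 i = 2} = {4}"
  proof -
    have "i = 4" if "i \<in> {1..4::nat}" "c4 i = 2" for i
      using that le4[of i] c4_vals by auto
    then show ?thesis using c4_vals by auto
  qed
  have p1: "pm1 1 = hmult 1 2 hunit (\<lambda>i. if i = 1 then 1 else if i = 2 then -1 else 0)"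
    using pm1.simps(2)[of 0] by simp
  have p2: "pm1 2 = hmult 2 2 (pm1 1) (\<lambda>i. if i = 1 then 1 else if i = 2 then -1 else 0)"
    using pm1.simps(2)[of 1] by (simp add: numeral_2_eq_2)
  have a1: "pm1 1 1 = 1" "pm1 1 2 = -1" unfolding p1 by (simp_all add: hmult_def hunit_def)
  have v1: "pm1 2 1 = 1" "pm1 2 4 = 1" unfolding p2 using a1 by (simp_all add: hmult_def)
  show "(int \<circ> ones 2) j = hmap 4 2 c4 (pm1 2) j"
  proof (cases "j = 1 \<or> j = 2")
    case True then show ?thesis
    proof
      assume "j = 1" then show ?thesis unfolding hmap_def ones_def using s1 v1 by simp
    next
      assume "j = 2" then show ?thesis unfolding hmap_def ones_def using s2 v1 by simp
    qed
  next
    case False then show ?thesis unfolding hmap_def ones_def by auto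
  qed
qed




context fixes R :: "'a gamma_ring" assumes G: "gamma_ring R"
begin

lemma part1:
  assumes F: "formal_difference_law R r"
  shows "mult R 1 1 0 (gmap R 2 1 (pp 2 1) 0 r) (gmap R 2 1 (pp 2 1) 0 r) = one R"
proof -
  let ?a = "gmap R 2 1 (pp 2 1) 0 r"
  have r: "r \<in> cells R 2 0" using F unfolding formal_difference_law_def by blast
  have a: "?a \<in> cells R 1 0" using gm_cells[OF G pm_pp21 r] .
  have sw: "mult R 1 2 0 ?a r = gmap R 2 2 swap2 0 r" using F unfolding formal_difference_law_def by blast
  have p2: "gmap R 2 1 (pp 2 2) 0 r = one R" using F unfolding formal_difference_law_def by blast
  have "gmap R (1*2) (1*1) (smash_map 1 2 1 id (pp 2 1)) 0 (mult R 1 2 0 ?a r)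
      = mult R 1 1 0 (gmap R 1 1 id 0 ?a) (gmap R 2 1 (pp 2 1) 0 r)"
    using mult_nat[OF G pm_id pm_pp21 a r] .
  then have "gmap R 2 1 (smash_map 1 2 1 id (pp 2 1)) 0 (mult R 1 2 0 ?a r) = mult R 1 1 0 ?a ?a"
    using gm_id[OF G a] by simp
  moreover have "gmap R 2 1 (smash_map 1 2 1 id (pp 2 1)) 0 (mult R 1 2 0 ?a r)
      = gmap R 2 1 (pp 2 1) 0 (mult R 1 2 0 ?a r)"
    by (rule gm_cong[OF G]) (auto dest!: le2 simp: smash_map_def smash_def pp_def)
  moreover have "gmap R 2 1 (pp 2 1) 0 (gmap R 2 2 swap2 0 r) = gmap R 2 1 (pp 2 1 \<circ> swap2) 0 r"
    using gm_comp[OF G pm_swap pm_pp21 r] .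
  moreover have "gmap R 2 1 (pp 2 1 \<circ> swap2) 0 r = gmap R 2 1 (pp 2 2) 0 r"
    by (rule gm_cong[OF G]) (auto dest!: le2 simp: swap2_def pp_def)
  ultimately show ?thesis using sw p2 by simp
qed

lemma W_lemma:
  assumes r: "r \<in> cells R 2 0"
  defines "w \<equiv> gmap R 4 2 c4 0 (rpow R r 2)"
  shows "rpow R w k = gmap R (2^(2*k)) (2^k) (C k) 0 (rpow R r (2*k))"
proof (induction k)
  case 0 then show ?case using gm_id[OF G one_cells[OF G], unfolded id_def] by (simp add: id_def)
next
  case (Suc k)
  have r2: "rpow R r 2 \<in> cells R 4 0" using rpow_cells[OF G r, of 2] by simp
  have w: "w \<in> cells R 2 0" unfolding w_def using gm_cells[OF G pm_c4 r2] .
  have X: "rpow R r (2*k) \<in> cells R (2^(2*k)) 0" using rpow_cells[OF G r] .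
  have "rpow R w (Suc k) = mult R 2 (2^k) 0 w (rpow R w k)" using rpow_left[OF G w] .
  also have "\<dots> = mult R 2 (2^k) 0 (gmap R 4 2 c4 0 (rpow R r 2)) (gmap R (2^(2*k)) (2^k) (C k) 0 (rpow R r (2*k)))"
    using Suc unfolding w_def by simp
  also have "\<dots> = gmap R (4 * 2^(2*k)) (2 * 2^k) (C (Suc k)) 0 (mult R 4 (2^(2*k)) 0 (rpow R r 2) (rpow R r (2*k)))"
    using mult_nat[OF G pm_c4 C_pmap r2 X] by simp
  also have "\<dots> = gmap R (4 * 2^(2*k)) (2 * 2^k) (C (Suc k)) 0 (rpow R r (Suc (Suc (2*k))))"
    using rpow_SS[OF G r, of "2*k"] by simp
  finally show ?case unfolding pow4 by simp
qed

lemma part2: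
  assumes F: "formal_difference_law R r"
  shows "formal_sum_law R (gmap R 3 2 (pp 3 2) 0 (gmap R 4 3 (pp 4 2) 0 (rpow R r 2)))"
proof -
  let ?a = "gmap R 2 1 (pp 2 1) 0 r"
  have r: "r \<in> cells R 2 0" using F unfolding formal_difference_law_def by blast
  have a: "?a \<in> cells R 1 0" using gm_cells[OF G pm_pp21 r] .
  have p2: "gmap R 2 1 (pp 2 2) 0 r = one R" using F unfolding formal_difference_law_def by blast
  have r2: "rpow R r 2 \<in> cells R 4 0" using rpow_cells[OF G r, of 2] by simp
  have r2e: "rpow R r 2 = mult R 2 2 0 r r" using rpow_2[OF G r] .
  define w where "w = gmap R 4 2 c4 0 (rpow R r 2)"
  have weq: "gmap R 3 2 (pp 3 2) 0 (gmap R 4 3 (pp 4 2) 0 (rpow R r 2)) = w"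
    unfolding w_def c4_def using gm_comp[OF G pm_pp42 pm_pp32 r2] .
  have w: "w \<in> cells R 2 0" unfolding w_def using gm_cells[OF G pm_c4 r2] .
  have q1: "gmap R 2 1 (pp 2 1) 0 w = one R"
  proof -
    have "gmap R 2 1 (pp 2 1) 0 w = gmap R 4 1 (pp 2 1 \<circ> c4) 0 (rpow R r 2)"
      unfolding w_def using gm_comp[OF G pm_c4 pm_pp21 r2] .
    also have "\<dots> = gmap R 4 1 (smash_map 2 2 1 (pp 2 1) (pp 2 1)) 0 (rpow R r 2)"
      by (rule gm_cong[OF G]) (auto dest!: le4 simp: smash_map_def smash_def pp_def c4_def)
    also have "\<dots> = mult R 1 1 0 ?a ?a"
      using mult_nat[OF G pm_pp21 pm_pp21 r r] r2e by simp
    finally show ?thesis using part1[OF F] by simp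
  qed
  have q2: "gmap R 2 1 (pp 2 2) 0 w = one R"
  proof -
    have "gmap R 2 1 (pp 2 2) 0 w = gmap R 4 1 (pp 2 2 \<circ> c4) 0 (rpow R r 2)"
      unfolding w_def using gm_comp[OF G pm_c4 pm_pp22 r2] .
    also have "\<dots> = gmap R 4 1 (smash_map 2 2 1 (pp 2 2) (pp 2 2)) 0 (rpow R r 2)"
      by (rule gm_cong[OF G]) (auto dest!: le4 simp: smash_map_def smash_def pp_def c4_def)
    also have "\<dots> = mult R 1 1 0 (one R) (one R)"
      using mult_nat[OF G pm_pp22 pm_pp22 r r] r2e p2 by simp
    finally show ?thesis using unit_l[OF G one_cells[OF G]] by simp
  qed
  have sym: "gmap R (2 ^ k) (2 ^ k) \<pi> 0 (rpow R w k) = rpow R w k"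
    if k: "k \<ge> 1" and p: "perm_of (2 ^ k) \<pi>" for k \<pi>
  proof -
    obtain \<pi>' where sp: "special_perm (2*k) \<pi>'" and eq: "\<forall>t \<le> 2^(2*k). \<pi> (C k t) = C k (\<pi>' t)"
      using lift_perm[OF p] by blast
    have pp': "pmap (2^(2*k)) (2^(2*k)) \<pi>'" using sp perm_pmap unfolding special_perm_def by blast
    have X: "rpow R r (2*k) \<in> cells R (2^(2*k)) 0" using rpow_cells[OF G r] .
    have fix': "gmap R (2^(2*k)) (2^(2*k)) \<pi>' 0 (rpow R r (2*k)) = rpow R r (2*k)"
      using F sp k unfolding formal_difference_law_def by auto
    have "gmap R (2 ^ k) (2 ^ k) \<pi> 0 (rpow R w k)
        = gmap R (2^(2*k)) (2^k) (\<pi> \<circ> C k) 0 (rpow R r (2*k))"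
      unfolding W_lemma[OF r, folded w_def] using gm_comp[OF G C_pmap perm_pmap[OF p] X] .
    also have "\<dots> = gmap R (2^(2*k)) (2^k) (C k \<circ> \<pi>') 0 (rpow R r (2*k))"
      by (rule gm_cong[OF G]) (use eq in auto)
    also have "\<dots> = gmap R (2^(2*k)) (2^k) (C k) 0 (gmap R (2^(2*k)) (2^(2*k)) \<pi>' 0 (rpow R r (2*k)))"
      using gm_comp[OF G pp' C_pmap X] by simp
    also have "\<dots> = rpow R w k" unfolding fix' W_lemma[OF r, folded w_def] ..
    finally show ?thesis .
  qed
  show ?thesis unfolding weq formal_sum_law_def using w q1 q2 sym by blast
qed

end

context fixes R :: "'a gamma_ring" assumes G: "gamma_ring R"
begin

lemma chi_map:
  fixes \<psi> :: "nat \<Rightarrow> (nat \<Rightarrow> int) \<Rightarrow> 'a"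
  assumes h: "hring_map R \<psi>"
  shows "hring_map R (\<lambda>n (x::nat\<Rightarrow>nat). \<psi> n (int \<circ> x))"
proof -
  have h1: "\<And>n x. x \<in> hcarrier n \<Longrightarrow> \<psi> n x \<in> cells R n 0"
    and h2: "\<And>n m f x. pmap n m f \<Longrightarrow> x \<in> hcarrier n \<Longrightarrow> \<psi> m (hmap n m f x) = gmap R n m f 0 (\<psi> n x)"
    and h3: "\<And>n. \<psi> n (\<lambda>_. 0) = base R n 0"
    and h4: "\<psi> 1 hunit = one R"
    and h5: "\<And>n m x y. x \<in> hcarrier n \<Longrightarrow> y \<in> hcarrier m \<Longrightarrow>
        \<psi> (n * m) (hmult n m x y) = mult R n m 0 (\<psi> n x) (\<psi> m y)"
    using h unfolding hring_map_def by blast+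
  have z: "int \<circ> (\<lambda>_::nat. 0::nat) = (\<lambda>_. 0)" by auto
  have z2: "\<forall>n. \<psi> n (int \<circ> (\<lambda>_. 0::nat)) = base R n 0" using h3 z by simp
  show ?thesis unfolding hring_map_def
    using h1 h2 h4 h5 int_hc int_hmap int_hmult int_hunit z2 by simp
qed

lemma ones_pow:
  fixes \<phi> :: "nat \<Rightarrow> (nat \<Rightarrow> nat) \<Rightarrow> 'a"
  assumes h: "hring_map R \<phi>"
  shows "\<phi> (2^k) (ones (2^k)) = rpow R (\<phi> 2 (ones 2)) k"
proof (induction k)
  case 0 then show ?case using h ones_1 unfolding hring_map_def by simp
next
  case (Suc k)
  have "\<phi> (2^k * 2) (hmult (2^k) 2 (ones (2^k)) (ones 2))
      = mult R (2^k) 2 0 (\<phi> (2^k) (ones (2^k))) (\<phi> 2 (ones 2))"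
    using h ones_hc unfolding hring_map_def by blast
  moreover have "ones (2^k * 2) = hmult (2^k) 2 (ones (2^k)) (ones 2)"
    by (rule ones_double) simp
  moreover have "\<phi> (2^Suc k) (ones (2^Suc k)) = \<phi> (2^k*2) (ones (2^k*2))" by (simp add: mult.commute)
  ultimately show ?case using Suc by simp
qed

lemma uniq:
  fixes \<phi> \<phi>' :: "nat \<Rightarrow> (nat \<Rightarrow> nat) \<Rightarrow> 'a"
  assumes h: "hring_map R \<phi>" and h': "hring_map R \<phi>'" and e: "\<phi> 2 (ones 2) = \<phi>' 2 (ones 2)"
    and x: "x \<in> hcarrier n"
  shows "\<phi> n x = \<phi>' n x"
proof (cases "n = 0")
  case True
  then have "x = (\<lambda>_. 0)" using x unfolding hcarrier_def by (auto simp: fun_eq_iff) (metis neq0_conv)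
  then show ?thesis using h h' True unfolding hring_map_def by simp
next
  case False
  then obtain K f where K: "pmap (2^K) n f" "hmap (2^K) n f (ones (2^K)) = x"
    using decomp[OF x] by (metis less_one not_le)
  have "\<phi> n x = gmap R (2^K) n f 0 (\<phi> (2^K) (ones (2^K)))"
    using h K ones_hc unfolding hring_map_def by metis
  moreover have "\<phi>' n x = gmap R (2^K) n f 0 (\<phi>' (2^K) (ones (2^K)))"
    using h' K ones_hc unfolding hring_map_def by metis
  ultimately show ?thesis using ones_pow[OF h] ones_pow[OF h'] e by simp
qed

end

theorem mainTheorem3:
  fixes R :: "'a gamma_ring" and r :: 'a
  assumes "gamma_ring R" and "formal_difference_law R r"
  shows "mult R 1 1 0 (gmap R 2 1 (pp 2 1) 0 r) (gmap R 2 1 (pp 2 1) 0 r) = one R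
    \<and> formal_sum_law R (gmap R 3 2 (pp 3 2) 0 (gmap R 4 3 (pp 4 2) 0 (rpow R r 2)))
    \<and> (discrete R \<longrightarrow>
        (\<forall>(\<phi> :: nat \<Rightarrow> (nat \<Rightarrow> nat) \<Rightarrow> 'a) (\<psi> :: nat \<Rightarrow> (nat \<Rightarrow> int) \<Rightarrow> 'a).
           hring_map R \<phi>
           \<and> (\<forall>n\<ge>1. \<phi> (2 ^ n) (ones (2 ^ n))
                 = rpow R (gmap R 3 2 (pp 3 2) 0 (gmap R 4 3 (pp 4 2) 0 (rpow R r 2))) n)
           \<and> hring_map R \<psi>
           \<and> (\<forall>n\<ge>1. \<psi> (2 ^ n) (pm1 n) = rpow R r n)
           \<longrightarrow> (\<forall>n. \<forall>x\<in>hcarrier n. \<phi> n x = \<psi> n (int \<circ> x))))"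
proof -
  note G = assms(1) and F = assms(2)
  have r: "r \<in> cells R 2 0" using F unfolding formal_difference_law_def by blast
  have r2: "rpow R r 2 \<in> cells R 4 0" using rpow_cells[OF G r, of 2] by simp
  define w where "w = gmap R 3 2 (pp 3 2) 0 (gmap R 4 3 (pp 4 2) 0 (rpow R r 2))"
  have weq: "w = gmap R 4 2 c4 0 (rpow R r 2)"
    unfolding w_def c4_def using gm_comp[OF G pm_pp42 pm_pp32 r2] .
  have w: "w \<in> cells R 2 0" unfolding weq using gm_cells[OF G pm_c4 r2] .
  have P3: "\<phi> n x = \<psi> n (int \<circ> x)"
    if h\<phi>: "hring_map R \<phi>" and e\<phi>: "\<forall>n\<ge>1. \<phi> (2 ^ n) (ones (2 ^ n)) = rpow R w n"
      and h\<psi>: "hring_map R \<psi>" and e\<psi>: "\<forall>n\<ge>1. \<psi> (2 ^ n) (pm1 n) = rpow R r n"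
      and x: "x \<in> hcarrier n"
    for \<phi> :: "nat \<Rightarrow> (nat \<Rightarrow> nat) \<Rightarrow> 'a" and \<psi> :: "nat \<Rightarrow> (nat \<Rightarrow> int) \<Rightarrow> 'a" and n x
  proof -
    have a: "\<phi> 2 (ones 2) = w" using e\<phi>[rule_format, of 1] rpow1[OF G w] by simp
    have p4: "\<psi> 4 (pm1 2) = rpow R r 2" using e\<psi>[rule_format, of 2] by simp
    have hc4: "pm1 2 \<in> hcarrier 4" using pm1_hc[of 2] by simp
    have "\<psi> 2 (int \<circ> ones 2) = \<psi> 2 (hmap 4 2 c4 (pm1 2))" by (simp add: int_ones2)
    also have "\<dots> = gmap R 4 2 c4 0 (\<psi> 4 (pm1 2))"
      using h\<psi> pm_c4 hc4 unfolding hring_map_def by blast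
    finally have b: "\<psi> 2 (int \<circ> ones 2) = w" using p4 weq by simp
    show ?thesis
      using uniq[OF G h\<phi> chi_map[OF G h\<psi>] _ x] a b by simp
  qed
  show ?thesis
    using part1[OF G F] part2[OF G F] P3 unfolding w_def[symmetric] by blast
qed



end
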